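(* In the setting where, in the inertial frame of the City (speed of light $c$), a Caravan leaves the City at time $0$ with constant velocity $V_c$, and a Messenger, after riding with the Caravan until the Caravan's proper time equals $T_1>0$, shuttles between Caravan and City at constant speed $V_m$ with instantaneous turnarounds, where $0<V_c<V_m<c$ and $q=\frac{V_c}{V_m-V_c}$: the Messenger's proper time $T_{n,\mathrm{Mes}}$ at his $n$-th departure from the Caravan ($n\ge1$) is $$T_{n,\mathrm{Mes}}=\rho\,T_1(1+2q)^{n-1}+(1-\rho)\,T_1,\qquad \rho=\frac{\sqrt{1-V_m^2/c^2}}{\sqrt{1-V_c^2/c^2}}.$$
   Context: Proper time of an observer moving with velocity $\vec v(\tau)$ in an inertial frame is $\int_0^t\sqrt{1-|\vec v(\tau)|^2/c^2}\,d\tau$. All clocks (City, Caravan, Messenger) are synchronized at the origin at time $0$. Before leaving the Caravan the Messenger moves with it at velocity $V_c$. *)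

theory Defs
  imports "HOL-Analysis.Analysis"
begin

end

theory Submission
  imports Defs
begin

lemma const_piece:
  fixes f :: "real \<Rightarrow> real"
  assumes "x \<le> y" and "\<And>t. x < t \<Longrightarrow> t < y \<Longrightarrow> f t = C"
  shows "(f has_integral (C * (y - x))) {x..y}"
proof -
  have "((\<lambda>t. C) has_integral (Henstock_Kurzweil_Integration.content {x..y} *\<^sub>R C)) {x..y}" by blast
  hence h: "((\<lambda>t. C) has_integral (C * (y - x))) {x..y}" using assms(1) by (simp add: mult.commute)
  show ?thesis
    by (rule has_integral_spike_finite[of "{x,y}" _ _ "\<lambda>t. C"]) (use assms h in auto)
qed

theorem mainTheorem3:
  fixes c Vc Vm T1 :: real
    and d a :: "nat \<Rightarrow> real"
    and v :: "real \<Rightarrow> real"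
    and n :: nat
  assumes "0 < Vc" and "Vc < Vm" and "Vm < c" and "0 < T1"
    and dep1: "d 1 * sqrt (1 - Vc\<^sup>2 / c\<^sup>2) = T1"
    and to_city: "\<And>k. k \<ge> 1 \<Longrightarrow> Vc * d k - Vm * (a k - d k) = 0"
    and catch_up: "\<And>k. k \<ge> 1 \<Longrightarrow> Vm * (d (Suc k) - a k) = Vc * d (Suc k)"
    and v_ride: "\<And>\<tau>. 0 \<le> \<tau> \<Longrightarrow> \<tau> < d 1 \<Longrightarrow> v \<tau> = Vc"
    and v_back: "\<And>k \<tau>. k \<ge> 1 \<Longrightarrow> d k < \<tau> \<Longrightarrow> \<tau> < a k \<Longrightarrow> v \<tau> = - Vm"
    and v_out: "\<And>k \<tau>. k \<ge> 1 \<Longrightarrow> a k < \<tau> \<Longrightarrow> \<tau> < d (Suc k) \<Longrightarrow> v \<tau> = Vm"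
    and "n \<ge> 1"
  shows "let q = Vc / (Vm - Vc);
             \<rho> = sqrt (1 - Vm\<^sup>2 / c\<^sup>2) / sqrt (1 - Vc\<^sup>2 / c\<^sup>2)
         in ((\<lambda>\<tau>. sqrt (1 - \<bar>v \<tau>\<bar>\<^sup>2 / c\<^sup>2)) has_integral
              (\<rho> * T1 * (1 + 2 * q) ^ (n - 1) + (1 - \<rho>) * T1)) {0 .. d n}"
proof -
  define f where "f = (\<lambda>\<tau>. sqrt (1 - \<bar>v \<tau>\<bar>\<^sup>2 / c\<^sup>2))"
  define sc where "sc = sqrt (1 - Vc\<^sup>2 / c\<^sup>2)"
  define sm where "sm = sqrt (1 - Vm\<^sup>2 / c\<^sup>2)"
  define q where "q = Vc / (Vm - Vc)"
  have c0: "c > 0" using assms by linarith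
  have "Vc\<^sup>2 < c\<^sup>2" using assms by (intro power_strict_mono) auto
  hence "Vc\<^sup>2 / c\<^sup>2 < 1" using c0 by simp
  hence sc0: "sc > 0" unfolding sc_def by simp
  have "Vm\<^sup>2 < c\<^sup>2" using assms by (intro power_strict_mono) auto
  hence "Vm\<^sup>2 / c\<^sup>2 < 1" using c0 by simp
  hence sm0: "sm > 0" unfolding sm_def by simp
  have d1: "d 1 = T1 / sc" using dep1 sc0 by (simp add: sc_def[symmetric] field_simps)
  have d1pos: "d 1 > 0" using d1 sc0 assms by simp
  have ak: "a k = d k * (Vc + Vm) / Vm" if "k \<ge> 1" for k
    using to_city[OF that] assms by (simp add: field_simps)
  have dS: "d (Suc k) = d k * (1 + 2*q)" if "k \<ge> 1" for k
  proof -
    have "d (Suc k) * (Vm - Vc) = Vm * a k" using catch_up[OF that] by (simp add: algebra_simps)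
    hence "d (Suc k) = Vm * a k / (Vm - Vc)" using assms by (simp add: field_simps)
    also have "\<dots> = d k * (Vc + Vm) / (Vm - Vc)" using ak[OF that] assms by simp
    also have "\<dots> = d k * (1 + 2*q)" unfolding q_def using assms by (simp add: field_simps)
    finally show ?thesis .
  qed
  have q0: "q > 0" unfolding q_def using assms by simp
  have dpos: "d k > 0" if "k \<ge> 1" for k using that
  proof (induction k rule: dec_induct)
    case base then show ?case using d1pos by simp
  next
    case (step k) then show ?case using dS[OF step(1)] q0 by simp
  qed
  have dclosed: "d k = d 1 * (1+2*q)^(k-1)" if "k \<ge> 1" for k using that
  proof (induction k rule: dec_induct)
    case base then show ?case by simp
  next
    case (step k)
    then show ?case using dS[OF step(1)]
      by (metis Suc_diff_le mult.commute mult.left_commute power_Suc diff_Suc_1)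
  qed
  have main: "(f has_integral (T1 + sm * (d k - d 1))) {0..d k}" if "k \<ge> 1" for k using that
  proof (induction k rule: dec_induct)
    case base
    have "(f has_integral (sc * (d 1 - 0))) {0..d 1}"
      by (rule const_piece) (use d1pos v_ride in \<open>auto simp: f_def sc_def\<close>)
    then show ?case using d1 sc0 by simp
  next
    case (step k)
    have a1: "d k \<le> a k"
    proof -
      have "Vm * (a k - d k) = Vc * d k" using to_city[OF step(1)] by simp
      moreover have "Vc * d k > 0" using dpos[OF step(1)] assms by simp
      ultimately have "Vm * (a k - d k) > 0" by linarith
      hence "a k - d k > 0" using assms by (simp add: zero_less_mult_iff)
      thus ?thesis by simp
    qed
    have a2: "a k \<le> d (Suc k)"
    proof -
      have "Vm * (d (Suc k) - a k) = Vc * d (Suc k)" using catch_up[OF step(1)] by simp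
      moreover have "Vc * d (Suc k) > 0" using dpos[of "Suc k"] step(1) \<open>0 < Vc\<close> by simp
      ultimately have "Vm * (d (Suc k) - a k) > 0" by linarith
      hence "d (Suc k) - a k > 0" using assms by (simp add: zero_less_mult_iff)
      thus ?thesis by simp
    qed
    have i1: "(f has_integral (sm * (a k - d k))) {d k..a k}"
      by (rule const_piece[OF a1]) (use v_back[OF step(1)] in \<open>auto simp: f_def sm_def\<close>)
    have i2: "(f has_integral (sm * (d (Suc k) - a k))) {a k..d (Suc k)}"
      by (rule const_piece[OF a2]) (use v_out[OF step(1)] in \<open>auto simp: f_def sm_def\<close>)
    have i12: "(f has_integral (sm * (a k - d k) + sm * (d (Suc k) - a k))) {d k..d (Suc k)}"
      by (rule has_integral_combine[OF a1 a2 i1 i2])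
    have "(f has_integral (T1 + sm * (d k - d 1) + (sm * (a k - d k) + sm * (d (Suc k) - a k)))) {0..d (Suc k)}"
      by (rule has_integral_combine[OF _ _ step(3) i12]) (use dpos[OF step(1)] a1 a2 in auto)
    then show ?case by (simp add: algebra_simps)
  qed
  have "T1 + sm * (d n - d 1) = sm / sc * T1 * (1 + 2 * q) ^ (n - 1) + (1 - sm / sc) * T1"
    using dclosed[OF assms(11)] d1 sc0 by (simp add: field_simps)
  then show ?thesis using main[OF assms(11)]
    unfolding Let_def f_def[symmetric] sc_def[symmetric] sm_def[symmetric] q_def[symmetric] by simp
qed

end
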